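(* Let $n>p$ be positive integers, $A\in\operatorname{Skew}(p)$ and $H\in\mathbb{R}^{(n-p)\times p}$. Then \[ \begin{pmatrix} I_p & A\\ 0 & H\end{pmatrix}\exp_m\begin{pmatrix} A & A^2-H^TH\\ I_p & A\end{pmatrix}\begin{pmatrix} I_p\\ 0\end{pmatrix}=\exp_m\begin{pmatrix} 2A & -H^T\\ H & 0\end{pmatrix}\begin{pmatrix} I_p\\ 0\end{pmatrix}. \]
   Context: $\operatorname{Skew}(p)$ denotes the real skew-symmetric $p\times p$ matrices and $\exp_m$ the matrix exponential. *)

theory Defs
  imports "HOL-Analysis.Analysis"
begin

fun matpow :: "real^'n^'n \<Rightarrow> nat \<Rightarrow> real^'n^'n" where
  "matpow M 0 = mat 1"
| "matpow M (Suc k) = M ** matpow M k"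

definition exp_m :: "real^'n^'n \<Rightarrow> real^'n^'n" where
  "exp_m M = (\<Sum>k. (1 / fact k) *\<^sub>R matpow M k)"

definition block :: "real^'c^'a \<Rightarrow> real^'d^'a \<Rightarrow> real^'c^'b \<Rightarrow> real^'d^'b
    \<Rightarrow> real^('c + 'd)^('a + 'b)" where
  "block P Q R S = (\<chi> i j. case i of
      Inl a \<Rightarrow> (case j of Inl c \<Rightarrow> P $ a $ c | Inr d \<Rightarrow> Q $ a $ d)
    | Inr b \<Rightarrow> (case j of Inl c \<Rightarrow> R $ b $ c | Inr d \<Rightarrow> S $ b $ d))"

definition vblock :: "real^'c^'a \<Rightarrow> real^'c^'b \<Rightarrow> real^'c^('a + 'b)" where
  "vblock P R = (\<chi> i j. case i of Inl a \<Rightarrow> P $ a $ j | Inr b \<Rightarrow> R $ b $ j)"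

end

theory Submission
  imports Defs
begin

lemma sum_UNIV_Plus:
  fixes f :: "('a::finite + 'b::finite) \<Rightarrow> 'c::comm_monoid_add"
  shows "sum f UNIV = (\<Sum>a\<in>UNIV. f (Inl a)) + (\<Sum>b\<in>UNIV. f (Inr b))"
  using sum.Plus[of "UNIV::'a set" "UNIV::'b set" f] by (simp add: o_def)

lemma block_mult:
  "block P Q R S ** block P' Q' R' S' =
   block (P**P' + Q**R') (P**Q' + Q**S') (R**P'+S**R') (R**Q'+S**S')"
  unfolding block_def matrix_matrix_mult_def
  by (auto simp: vec_eq_iff sum_UNIV_Plus split: sum.splits)

lemma block_vblock:
  "block P Q R S ** vblock P' R' = vblock (P**P' + Q**R') (R**P'+S**R')"
  unfolding block_def vblock_def matrix_matrix_mult_def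
  by (auto simp: vec_eq_iff sum_UNIV_Plus split: sum.splits)

lemma mult_bound:
  fixes X :: "real^'n^'m" and Y :: "real^'k^'n"
  shows "norm (X ** Y) \<le> real (CARD('m) * CARD('k) * CARD('n)) * norm X * norm Y"
proof -
  have e: "\<bar>(X ** Y) $ i $ j\<bar> \<le> real CARD('n) * norm X * norm Y" for i j
  proof -
    have "\<bar>(X ** Y) $ i $ j\<bar> = \<bar>\<Sum>k\<in>UNIV. X$i$k * Y$k$j\<bar>"
      by (simp add: matrix_matrix_mult_def)
    also have "\<dots> \<le> (\<Sum>k\<in>(UNIV::'n set). \<bar>X$i$k * Y$k$j\<bar>)" by (rule sum_abs)
    also have "\<dots> \<le> (\<Sum>k\<in>(UNIV::'n set). norm X * norm Y)"
    proof (rule sum_mono)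
      fix k
      have a1: "norm (X$i) \<le> norm X" by (rule Finite_Cartesian_Product.norm_nth_le)
      have a2: "\<bar>X$i$k\<bar> \<le> norm (X$i)" by (rule component_le_norm_cart)
      have a: "\<bar>X$i$k\<bar> \<le> norm X" using a1 a2 by linarith
      have b1: "norm (Y$k) \<le> norm Y" by (rule Finite_Cartesian_Product.norm_nth_le)
      have b2: "\<bar>Y$k$j\<bar> \<le> norm (Y$k)" by (rule component_le_norm_cart)
      have b: "\<bar>Y$k$j\<bar> \<le> norm Y" using b1 b2 by linarith
      show "\<bar>X$i$k * Y$k$j\<bar> \<le> norm X * norm Y"
        unfolding abs_mult by (rule mult_mono[OF a b]) auto
    qed
    finally show ?thesis by simp
  qed
  have r: "norm ((X ** Y) $ i) \<le> real CARD('k) * (real CARD('n) * norm X * norm Y)" for i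
  proof -
    have "norm ((X ** Y) $ i) \<le> (\<Sum>j\<in>(UNIV::'k set). \<bar>(X ** Y) $ i $ j\<bar>)" by (rule norm_le_l1_cart)
    also have "\<dots> \<le> (\<Sum>j\<in>(UNIV::'k set). real CARD('n) * norm X * norm Y)"
      by (rule sum_mono) (rule e)
    finally show ?thesis by simp
  qed
  have "norm (X ** Y) \<le> (\<Sum>i\<in>(UNIV::'m set). norm ((X ** Y) $ i))"
    unfolding norm_vec_def by (rule L2_set_le_sum) simp
  also have "\<dots> \<le> (\<Sum>i\<in>(UNIV::'m set). real CARD('k) * (real CARD('n) * norm X * norm Y))"
    by (rule sum_mono) (rule r)
  finally show ?thesis by (simp add: mult_ac)
qed

lemma bl_left:
  fixes L :: "real^'n^'m"
  shows "bounded_linear (\<lambda>X::real^'k^'n. L ** X)"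
proof (rule bounded_linear_intro[where K="real (CARD('m) * CARD('k) * CARD('n)) * norm L"])
  show "L ** (x + y) = L ** x + L ** y" for x y by (rule matrix_add_ldistrib)
  show "L ** (r *\<^sub>R x) = r *\<^sub>R (L ** x)" for r x
    by (simp add: matrix_matrix_mult_def vec_eq_iff sum_distrib_left mult_ac)
  show "norm (L ** x) \<le> norm x * (real (CARD('m) * CARD('k) * CARD('n)) * norm L)" for x :: "real^'k^'n"
  proof -
    have "norm (L ** x) \<le> real (CARD('m) * CARD('k) * CARD('n)) * norm L * norm x" by (rule mult_bound)
    then show ?thesis by (simp add: mult_ac)
  qed
qed

lemma bl_right:
  fixes L :: "real^'k^'n"
  shows "bounded_linear (\<lambda>X::real^'n^'m. X ** L)"
proof (rule bounded_linear_intro[where K="real (CARD('m) * CARD('k) * CARD('n)) * norm L"])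
  show "(x + y) ** L = x ** L + y ** L" for x y
    by (simp add: matrix_matrix_mult_def vec_eq_iff sum.distrib distrib_right)
  show "(r *\<^sub>R x) ** L = r *\<^sub>R (x ** L)" for r x
    by (simp add: matrix_matrix_mult_def vec_eq_iff sum_distrib_left mult_ac)
  show "norm (x ** L) \<le> norm x * (real (CARD('m) * CARD('k) * CARD('n)) * norm L)" for x :: "real^'n^'m"
  proof -
    have "norm (x ** L) \<le> real (CARD('m) * CARD('k) * CARD('n)) * norm x * norm L" by (rule mult_bound)
    then show ?thesis by (simp add: mult_ac)
  qed
qed

lemma matpow_bound:
  fixes M :: "real^'n^'n"
  shows "norm (matpow M k) \<le> norm (mat 1 :: real^'n^'n) * (real (CARD('n)^3) * norm M)^k"
proof (induction k)
  case 0 then show ?case by simp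
next
  case (Suc k)
  have "norm (matpow M (Suc k)) \<le> real (CARD('n)^3) * norm M * norm (matpow M k)"
    using mult_bound[of M "matpow M k"] by (simp add: power3_eq_cube)
  also have "\<dots> \<le> real (CARD('n)^3) * norm M * (norm (mat 1 :: real^'n^'n) * (real (CARD('n)^3) * norm M)^k)"
    by (rule mult_left_mono[OF Suc]) simp
  finally show ?case by (simp add: mult_ac)
qed

lemma exp_m_sums:
  fixes M :: "real^'n^'n"
  shows "(\<lambda>k. (1 / fact k) *\<^sub>R matpow M k) sums exp_m M"
proof -
  define c where "c = real (CARD('n)^3) * norm M"
  have s: "summable (\<lambda>k. norm (mat 1 :: real^'n^'n) * (inverse (fact k) * c^k))"
    by (rule summable_mult) (rule summable_exp)
  have "summable (\<lambda>k. (1 / fact k) *\<^sub>R matpow M k)"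
  proof (rule summable_comparison_test[OF _ s])
    show "\<exists>N. \<forall>n\<ge>N. norm ((1 / fact n) *\<^sub>R matpow M n) \<le> norm (mat 1 :: real^'n^'n) * (inverse (fact n) * c^n)"
    proof (intro exI allI impI)
      fix n :: nat
      have "norm ((1 / fact n) *\<^sub>R matpow M n) = inverse (fact n) * norm (matpow M n)"
        by (simp add: divide_inverse)
      also have "\<dots> \<le> inverse (fact n) * (norm (mat 1 :: real^'n^'n) * c^n)"
        by (rule mult_left_mono) (use matpow_bound[of M n] c_def in auto)
      finally show "norm ((1 / fact n) *\<^sub>R matpow M n) \<le> norm (mat 1 :: real^'n^'n) * (inverse (fact n) * c^n)"
        by (simp add: mult_ac)
    qed
  qed
  then show ?thesis unfolding exp_m_def by (rule summable_sums)
qed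

lemma intertwine_pow:
  fixes L :: "real^'m^'n" and M :: "real^'m^'m" and N :: "real^'n^'n"
  assumes "L ** M = N ** L"
  shows "L ** matpow M k = matpow N k ** L"
proof (induction k)
  case 0 then show ?case by simp
next
  case (Suc k)
  have "L ** matpow M (Suc k) = (L ** M) ** matpow M k" by (simp add: matrix_mul_assoc)
  also have "\<dots> = N ** (L ** matpow M k)" by (simp add: assms matrix_mul_assoc)
  also have "\<dots> = matpow N (Suc k) ** L" by (simp add: Suc matrix_mul_assoc)
  finally show ?case .
qed

lemma intertwine_exp:
  fixes L :: "real^'m^'n" and M :: "real^'m^'m" and N :: "real^'n^'n"
  assumes "L ** M = N ** L"
  shows "L ** exp_m M = exp_m N ** L"
proof -
  have a: "(\<lambda>k. L ** ((1 / fact k) *\<^sub>R matpow M k)) sums (L ** exp_m M)"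
    by (rule bounded_linear.sums[OF bl_left exp_m_sums])
  have b: "(\<lambda>k. ((1 / fact k) *\<^sub>R matpow N k) ** L) sums (exp_m N ** L)"
    by (rule bounded_linear.sums[OF bl_right exp_m_sums])
  have "(\<lambda>k. L ** ((1 / fact k) *\<^sub>R matpow M k)) = (\<lambda>k. ((1 / fact k) *\<^sub>R matpow N k) ** L)"
  proof
    fix k
    have "L ** ((1 / fact k) *\<^sub>R matpow M k) = (1 / fact k) *\<^sub>R (L ** matpow M k)"
      by (rule linear_cmul[OF bounded_linear.linear[OF bl_left]])
    also have "\<dots> = (1 / fact k) *\<^sub>R (matpow N k ** L)" by (simp add: intertwine_pow[OF assms])
    also have "\<dots> = ((1 / fact k) *\<^sub>R matpow N k) ** L"
      by (rule linear_cmul[OF bounded_linear.linear[OF bl_right], symmetric])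
    finally show "L ** ((1 / fact k) *\<^sub>R matpow M k) = ((1 / fact k) *\<^sub>R matpow N k) ** L" .
  qed
  with a have "(\<lambda>k. ((1 / fact k) *\<^sub>R matpow N k) ** L) sums (L ** exp_m M)" by simp
  from sums_unique2[OF this b] show ?thesis .
qed

theorem lemma3p2:
  fixes A :: "real^'p^'p" and H :: "real^'p^'q"
  assumes "transpose A = - A"
  shows "block (mat 1) A (0 :: real^'p^'q) H
           ** exp_m (block A (A ** A - transpose H ** H) (mat 1) A)
           ** vblock (mat 1) (0 :: real^'p^'p)
         = exp_m (block (2 *\<^sub>R A) (- transpose H) H (0 :: real^'q^'q))
           ** vblock (mat 1) (0 :: real^'p^'q)"
proof -
  let ?L = "block (mat 1) A (0 :: real^'p^'q) H"
  let ?M = "block A (A ** A - transpose H ** H) (mat 1) A"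
  let ?N = "block (2 *\<^sub>R A) (- transpose H) H (0 :: real^'q^'q)"
  have neg: "(- transpose H) ** H = - (transpose H ** H)"
    by (simp add: matrix_matrix_mult_def vec_eq_iff sum_negf)
  have sub: "A ** (A ** A - transpose H ** H) = A ** (A ** A) - A ** (transpose H ** H)"
    by (simp add: matrix_matrix_mult_def vec_eq_iff sum_subtractf right_diff_distrib)
  have LM1: "?L ** ?M = block (A + A) (A ** A - transpose H ** H + A ** A) H (H ** A)"
    unfolding block_mult by simp
  have LM2: "?N ** ?L = block (2 *\<^sub>R A) (2 *\<^sub>R A ** A + - transpose H ** H) H (H ** A)"
    unfolding block_mult by simp
  have e1: "A + A = 2 *\<^sub>R A" by (rule scaleR_2[symmetric])
  have e2: "A ** A - transpose H ** H + A ** A = 2 *\<^sub>R A ** A + - transpose H ** H"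
    by (simp add: vec_eq_iff matrix_matrix_mult_def sum_distrib_left sum_negf sum.distrib[symmetric] algebra_simps)
  have LM: "?L ** ?M = ?N ** ?L"
    unfolding LM1 LM2 e1 e2 ..
  have "?L ** exp_m ?M ** vblock (mat 1) (0 :: real^'p^'p) = exp_m ?N ** (?L ** vblock (mat 1) (0 :: real^'p^'p))"
    by (metis intertwine_exp[OF LM] matrix_mul_assoc)
  also have "?L ** vblock (mat 1) (0 :: real^'p^'p) = vblock (mat 1) (0 :: real^'p^'q)"
    by (simp add: block_vblock)
  finally show ?thesis .
qed
end
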